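(* Let $(\mathcal A;\mathcal E)$ be an exact category with exact coproducts, and let $B\xrightarrow{m^i}C^i\to A^i$, $i\in I$ ($I$ a set), be conflations with common first term $B$. Then the pushout $m=\amalg_B m^i:B\to\amalg_B C^i$ of the family $(m^i)_{i\in I}$ exists, and it is the inflation of the conflation obtained by pushing out the coproduct conflation $B^{(I)}\xrightarrow{\amalg_i m^i}\amalg_i C^i\to\amalg_i A^i$ along the sum morphism $s:B^{(I)}\to B$; in particular its cokernel is $\amalg_i A^i$.
   Context: An exact category $(\mathcal A;\mathcal E)$ is an additive category with a class of kernel–cokernel pairs (conflations) satisfying the Quillen–Keller axioms. It has exact coproducts if set-indexed coproducts exist in $\mathcal A$ and the coproduct of any set of conflations is a conflation. $B^{(I)}$ denotes the coproduct of $I$ copies of $B$ and $s:B^{(I)}\to B$ is the morphism restricting to $1_B$ on each copy. *)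

theory Defs
  imports Main
begin

text \<open>A category with explicit sets of objects and morphisms, domain/codomain,
composition (comp g f = g after f), identities, and the data of a preadditive
structure (zero morphisms, addition, negation of parallel morphisms).\<close>

record ('o, 'm) addcat =
  Ob :: "'o set"
  Mor :: "'m set"
  dom :: "'m \<Rightarrow> 'o"
  cod :: "'m \<Rightarrow> 'o"
  comp :: "'m \<Rightarrow> 'm \<Rightarrow> 'm"
  ident :: "'o \<Rightarrow> 'm"
  zero :: "'o \<Rightarrow> 'o \<Rightarrow> 'm"
  plus :: "'m \<Rightarrow> 'm \<Rightarrow> 'm"
  neg :: "'m \<Rightarrow> 'm"

definition hom :: "('o, 'm, 'x) addcat_scheme \<Rightarrow> 'o \<Rightarrow> 'o \<Rightarrow> 'm set" where
  "hom C a b = {f \<in> Mor C. dom C f = a \<and> cod C f = b}"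

definition category :: "('o, 'm, 'x) addcat_scheme \<Rightarrow> bool" where
  "category C \<longleftrightarrow>
     (\<forall>f \<in> Mor C. dom C f \<in> Ob C \<and> cod C f \<in> Ob C) \<and>
     (\<forall>a \<in> Ob C. ident C a \<in> hom C a a) \<and>
     (\<forall>a \<in> Ob C. \<forall>b \<in> Ob C. \<forall>c \<in> Ob C. \<forall>f \<in> hom C a b. \<forall>g \<in> hom C b c.
        comp C g f \<in> hom C a c) \<and>
     (\<forall>a \<in> Ob C. \<forall>b \<in> Ob C. \<forall>c \<in> Ob C. \<forall>d \<in> Ob C.
        \<forall>f \<in> hom C a b. \<forall>g \<in> hom C b c. \<forall>h \<in> hom C c d.
        comp C h (comp C g f) = comp C (comp C h g) f) \<and>
     (\<forall>f \<in> Mor C. comp C f (ident C (dom C f)) = f \<and> comp C (ident C (cod C f)) f = f)"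

definition preadditive :: "('o, 'm, 'x) addcat_scheme \<Rightarrow> bool" where
  "preadditive C \<longleftrightarrow> category C \<and>
     (\<forall>a \<in> Ob C. \<forall>b \<in> Ob C.
        zero C a b \<in> hom C a b \<and>
        (\<forall>f \<in> hom C a b. \<forall>g \<in> hom C a b. plus C f g \<in> hom C a b) \<and>
        (\<forall>f \<in> hom C a b. neg C f \<in> hom C a b) \<and>
        (\<forall>f \<in> hom C a b. \<forall>g \<in> hom C a b. \<forall>h \<in> hom C a b.
           plus C (plus C f g) h = plus C f (plus C g h)) \<and>
        (\<forall>f \<in> hom C a b. \<forall>g \<in> hom C a b. plus C f g = plus C g f) \<and>
        (\<forall>f \<in> hom C a b. plus C f (zero C a b) = f) \<and>
        (\<forall>f \<in> hom C a b. plus C f (neg C f) = zero C a b)) \<and>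
     (\<forall>a \<in> Ob C. \<forall>b \<in> Ob C. \<forall>c \<in> Ob C.
        \<forall>f \<in> hom C a b. \<forall>f' \<in> hom C a b. \<forall>g \<in> hom C b c. \<forall>g' \<in> hom C b c.
        comp C g (plus C f f') = plus C (comp C g f) (comp C g f') \<and>
        comp C (plus C g g') f = plus C (comp C g f) (comp C g' f))"

definition is_zero_object :: "('o, 'm, 'x) addcat_scheme \<Rightarrow> 'o \<Rightarrow> bool" where
  "is_zero_object C z \<longleftrightarrow> z \<in> Ob C \<and> ident C z = zero C z z"

definition is_biproduct ::
  "('o, 'm, 'x) addcat_scheme \<Rightarrow> 'o \<Rightarrow> 'o \<Rightarrow> 'o \<Rightarrow> 'm \<Rightarrow> 'm \<Rightarrow> 'm \<Rightarrow> 'm \<Rightarrow> bool" where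
  "is_biproduct C a b s i1 i2 p1 p2 \<longleftrightarrow> s \<in> Ob C \<and>
     i1 \<in> hom C a s \<and> i2 \<in> hom C b s \<and> p1 \<in> hom C s a \<and> p2 \<in> hom C s b \<and>
     comp C p1 i1 = ident C a \<and> comp C p2 i2 = ident C b \<and>
     comp C p1 i2 = zero C b a \<and> comp C p2 i1 = zero C a b \<and>
     plus C (comp C i1 p1) (comp C i2 p2) = ident C s"

definition additive :: "('o, 'm, 'x) addcat_scheme \<Rightarrow> bool" where
  "additive C \<longleftrightarrow> preadditive C \<and> (\<exists>z. is_zero_object C z) \<and>
     (\<forall>a \<in> Ob C. \<forall>b \<in> Ob C. \<exists>s i1 i2 p1 p2. is_biproduct C a b s i1 i2 p1 p2)"

definition is_iso :: "('o, 'm, 'x) addcat_scheme \<Rightarrow> 'm \<Rightarrow> bool" where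
  "is_iso C f \<longleftrightarrow> f \<in> Mor C \<and> (\<exists>g \<in> hom C (cod C f) (dom C f).
     comp C g f = ident C (dom C f) \<and> comp C f g = ident C (cod C f))"

definition is_kernel :: "('o, 'm, 'x) addcat_scheme \<Rightarrow> 'm \<Rightarrow> 'm \<Rightarrow> bool" where
  "is_kernel C k f \<longleftrightarrow> k \<in> Mor C \<and> f \<in> Mor C \<and> cod C k = dom C f \<and>
     comp C f k = zero C (dom C k) (cod C f) \<and>
     (\<forall>g \<in> Mor C. cod C g = dom C f \<and> comp C f g = zero C (dom C g) (cod C f) \<longrightarrow>
        (\<exists>!h. h \<in> hom C (dom C g) (dom C k) \<and> comp C k h = g))"

definition is_cokernel :: "('o, 'm, 'x) addcat_scheme \<Rightarrow> 'm \<Rightarrow> 'm \<Rightarrow> bool" where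
  "is_cokernel C c f \<longleftrightarrow> c \<in> Mor C \<and> f \<in> Mor C \<and> dom C c = cod C f \<and>
     comp C c f = zero C (dom C f) (cod C c) \<and>
     (\<forall>g \<in> Mor C. dom C g = cod C f \<and> comp C g f = zero C (dom C f) (cod C g) \<longrightarrow>
        (\<exists>!h. h \<in> hom C (cod C c) (cod C g) \<and> comp C h c = g))"

definition kernel_cokernel_pair :: "('o, 'm, 'x) addcat_scheme \<Rightarrow> 'm \<Rightarrow> 'm \<Rightarrow> bool" where
  "kernel_cokernel_pair C i d \<longleftrightarrow> is_kernel C i d \<and> is_cokernel C d i"

text \<open>Pushout square: f : A \<rightarrow> B, g : A \<rightarrow> C', with g' : B \<rightarrow> P and f' : C' \<rightarrow> P
(f' is the pushout of f along g), g' f = f' g, universal.\<close>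
definition is_pushout ::
  "('o, 'm, 'x) addcat_scheme \<Rightarrow> 'm \<Rightarrow> 'm \<Rightarrow> 'o \<Rightarrow> 'm \<Rightarrow> 'm \<Rightarrow> bool" where
  "is_pushout C f g P f' g' \<longleftrightarrow> f \<in> Mor C \<and> g \<in> Mor C \<and> dom C f = dom C g \<and> P \<in> Ob C \<and>
     g' \<in> hom C (cod C f) P \<and> f' \<in> hom C (cod C g) P \<and> comp C g' f = comp C f' g \<and>
     (\<forall>T \<in> Ob C. \<forall>x \<in> hom C (cod C f) T. \<forall>y \<in> hom C (cod C g) T.
        comp C x f = comp C y g \<longrightarrow>
        (\<exists>!h. h \<in> hom C P T \<and> comp C h g' = x \<and> comp C h f' = y))"

text \<open>Pullback square: f : B \<rightarrow> A, g : C' \<rightarrow> A, with g' : P \<rightarrow> B and f' : P \<rightarrow> C'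
(f' is the pullback of f along g), f g' = g f', universal.\<close>
definition is_pullback ::
  "('o, 'm, 'x) addcat_scheme \<Rightarrow> 'm \<Rightarrow> 'm \<Rightarrow> 'o \<Rightarrow> 'm \<Rightarrow> 'm \<Rightarrow> bool" where
  "is_pullback C f g P f' g' \<longleftrightarrow> f \<in> Mor C \<and> g \<in> Mor C \<and> cod C f = cod C g \<and> P \<in> Ob C \<and>
     g' \<in> hom C P (dom C f) \<and> f' \<in> hom C P (dom C g) \<and> comp C f g' = comp C g f' \<and>
     (\<forall>T \<in> Ob C. \<forall>x \<in> hom C T (dom C f). \<forall>y \<in> hom C T (dom C g).
        comp C f x = comp C g y \<longrightarrow>
        (\<exists>!h. h \<in> hom C T P \<and> comp C g' h = x \<and> comp C f' h = y))"

definition inflation :: "('o, 'm, 'x) addcat_scheme \<Rightarrow> ('m \<times> 'm) set \<Rightarrow> 'm \<Rightarrow> bool" where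
  "inflation C E i \<longleftrightarrow> (\<exists>d. (i, d) \<in> E)"

definition deflation :: "('o, 'm, 'x) addcat_scheme \<Rightarrow> ('m \<times> 'm) set \<Rightarrow> 'm \<Rightarrow> bool" where
  "deflation C E d \<longleftrightarrow> (\<exists>i. (i, d) \<in> E)"

text \<open>Exact category in the sense of Quillen--Keller (axioms as in Buehler's survey):
E is a class of kernel-cokernel pairs, closed under isomorphisms, satisfying
[E0],[E0op],[E1],[E1op],[E2],[E2op].\<close>
definition exact_category :: "('o, 'm, 'x) addcat_scheme \<Rightarrow> ('m \<times> 'm) set \<Rightarrow> bool" where
  "exact_category C E \<longleftrightarrow> additive C \<and>
     (\<forall>(i, d) \<in> E. kernel_cokernel_pair C i d) \<and>
     (\<forall>i d i' d' a b c. (i, d) \<in> E \<and> kernel_cokernel_pair C i' d' \<and>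
        is_iso C a \<and> is_iso C b \<and> is_iso C c \<and>
        a \<in> hom C (dom C i) (dom C i') \<and> b \<in> hom C (cod C i) (cod C i') \<and>
        c \<in> hom C (cod C d) (cod C d') \<and>
        comp C i' a = comp C b i \<and> comp C d' b = comp C c d \<longrightarrow> (i', d') \<in> E) \<and>
     (\<forall>a \<in> Ob C. inflation C E (ident C a)) \<and>
     (\<forall>a \<in> Ob C. deflation C E (ident C a)) \<and>
     (\<forall>i j. inflation C E i \<and> inflation C E j \<and> cod C i = dom C j \<longrightarrow>
        inflation C E (comp C j i)) \<and>
     (\<forall>d e. deflation C E d \<and> deflation C E e \<and> cod C d = dom C e \<longrightarrow>
        deflation C E (comp C e d)) \<and>
     (\<forall>i f. inflation C E i \<and> f \<in> Mor C \<and> dom C f = dom C i \<longrightarrow>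
        (\<exists>P i' f'. is_pushout C i f P i' f' \<and> inflation C E i')) \<and>
     (\<forall>d f. deflation C E d \<and> f \<in> Mor C \<and> cod C f = cod C d \<longrightarrow>
        (\<exists>P d' f'. is_pullback C d f P d' f' \<and> deflation C E d'))"

definition is_coproduct ::
  "('o, 'm, 'x) addcat_scheme \<Rightarrow> 'i set \<Rightarrow> ('i \<Rightarrow> 'o) \<Rightarrow> 'o \<Rightarrow> ('i \<Rightarrow> 'm) \<Rightarrow> bool" where
  "is_coproduct C I X S u \<longleftrightarrow> S \<in> Ob C \<and> (\<forall>i \<in> I. u i \<in> hom C (X i) S) \<and>
     (\<forall>T \<in> Ob C. \<forall>f. (\<forall>i \<in> I. f i \<in> hom C (X i) T) \<longrightarrow>
        (\<exists>!h. h \<in> hom C S T \<and> (\<forall>i \<in> I. comp C h (u i) = f i)))"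

definition is_coproduct_mor ::
  "('o, 'm, 'x) addcat_scheme \<Rightarrow> 'i set \<Rightarrow> 'o \<Rightarrow> ('i \<Rightarrow> 'm) \<Rightarrow> 'o \<Rightarrow> ('i \<Rightarrow> 'm)
     \<Rightarrow> ('i \<Rightarrow> 'm) \<Rightarrow> 'm \<Rightarrow> bool" where
  "is_coproduct_mor C I S u S' u' f h \<longleftrightarrow> h \<in> hom C S S' \<and>
     (\<forall>i \<in> I. comp C h (u i) = comp C (u' i) (f i))"

text \<open>Exact coproducts, for families indexed by subsets of the type 'i: all such
coproducts exist, and the coproduct of conflations is a conflation.\<close>
definition exact_coproducts ::
  "('o, 'm, 'x) addcat_scheme \<Rightarrow> ('m \<times> 'm) set \<Rightarrow> 'i itself \<Rightarrow> bool" where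
  "exact_coproducts C E (_ :: 'i itself) \<longleftrightarrow>
     (\<forall>(I :: 'i set) X. (\<forall>i \<in> I. X i \<in> Ob C) \<longrightarrow> (\<exists>S u. is_coproduct C I X S u)) \<and>
     (\<forall>(I :: 'i set) X Y Z m e SX uX SY uY SZ uZ mm ee.
        (\<forall>i \<in> I. (m i, e i) \<in> E \<and> m i \<in> hom C (X i) (Y i) \<and> e i \<in> hom C (Y i) (Z i)) \<and>
        is_coproduct C I X SX uX \<and> is_coproduct C I Y SY uY \<and> is_coproduct C I Z SZ uZ \<and>
        is_coproduct_mor C I SX uX SY uY m mm \<and> is_coproduct_mor C I SY uY SZ uZ e ee
        \<longrightarrow> (mm, ee) \<in> E)"

definition is_wide_pushout ::
  "('o, 'm, 'x) addcat_scheme \<Rightarrow> 'i set \<Rightarrow> 'o \<Rightarrow> ('i \<Rightarrow> 'o) \<Rightarrow> ('i \<Rightarrow> 'm)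
     \<Rightarrow> 'o \<Rightarrow> ('i \<Rightarrow> 'm) \<Rightarrow> 'm \<Rightarrow> bool" where
  "is_wide_pushout C I B X m P c mp \<longleftrightarrow> P \<in> Ob C \<and> mp \<in> hom C B P \<and>
     (\<forall>i \<in> I. c i \<in> hom C (X i) P \<and> comp C (c i) (m i) = mp) \<and>
     (\<forall>T \<in> Ob C. \<forall>t \<in> hom C B T. \<forall>f. (\<forall>i \<in> I. f i \<in> hom C (X i) T \<and> comp C (f i) (m i) = t)
        \<longrightarrow> (\<exists>!h. h \<in> hom C P T \<and> comp C h mp = t \<and> (\<forall>i \<in> I. comp C h (c i) = f i)))"

end

theory Submission
  imports Defs
begin

lemma hom_iff: "f \<in> hom C a b \<longleftrightarrow> f \<in> Mor C \<and> dom C f = a \<and> cod C f = b"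
  by (simp add: hom_def)

lemma comp_props:
  assumes "category C" "f \<in> Mor C" "g \<in> Mor C" "cod C f = dom C g"
  shows "comp C g f \<in> Mor C \<and> dom C (comp C g f) = dom C f \<and> cod C (comp C g f) = cod C g"
proof -
  have o: "dom C f \<in> Ob C" "cod C f \<in> Ob C" "cod C g \<in> Ob C"
    using assms unfolding category_def by auto
  have "comp C g f \<in> hom C (dom C f) (cod C f) \<longrightarrow> True" by simp
  have "\<forall>a \<in> Ob C. \<forall>b \<in> Ob C. \<forall>c \<in> Ob C. \<forall>f \<in> hom C a b. \<forall>g \<in> hom C b c.
        comp C g f \<in> hom C a c" using assms(1) unfolding category_def by blast
  then have "comp C g f \<in> hom C (dom C f) (cod C g)"
    using o assms by (auto simp: hom_def)
  then show ?thesis by (simp add: hom_def)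
qed

lemma comp_Mor[simp]: "category C \<Longrightarrow> f \<in> Mor C \<Longrightarrow> g \<in> Mor C \<Longrightarrow> cod C f = dom C g \<Longrightarrow> comp C g f \<in> Mor C"
  using comp_props[of C f g] by simp
lemma comp_dom[simp]: "category C \<Longrightarrow> f \<in> Mor C \<Longrightarrow> g \<in> Mor C \<Longrightarrow> cod C f = dom C g \<Longrightarrow> dom C (comp C g f) = dom C f"
  using comp_props[of C f g] by simp
lemma comp_cod[simp]: "category C \<Longrightarrow> f \<in> Mor C \<Longrightarrow> g \<in> Mor C \<Longrightarrow> cod C f = dom C g \<Longrightarrow> cod C (comp C g f) = cod C g"
  using comp_props[of C f g] by simp

lemma dom_Ob: "category C \<Longrightarrow> f \<in> Mor C \<Longrightarrow> dom C f \<in> Ob C"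
  unfolding category_def by blast
lemma cod_Ob: "category C \<Longrightarrow> f \<in> Mor C \<Longrightarrow> cod C f \<in> Ob C"
  unfolding category_def by blast

lemma assoc:
  assumes "category C" "f \<in> Mor C" "g \<in> Mor C" "h \<in> Mor C" "cod C f = dom C g" "cod C g = dom C h"
  shows "comp C h (comp C g f) = comp C (comp C h g) f"
proof -
  have H: "\<And>a b c d f g h. a \<in> Ob C \<Longrightarrow> b \<in> Ob C \<Longrightarrow> c \<in> Ob C \<Longrightarrow> d \<in> Ob C \<Longrightarrow>
        f \<in> hom C a b \<Longrightarrow> g \<in> hom C b c \<Longrightarrow> h \<in> hom C c d \<Longrightarrow>
        comp C h (comp C g f) = comp C (comp C h g) f" using assms(1) unfolding category_def by blast
  show ?thesis
    apply (rule H[of "dom C f" "cod C f" "cod C g" "cod C h"])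
    using assms dom_Ob cod_Ob by (simp_all add: hom_def)
qed

lemma ident_props:
  assumes "category C" "a \<in> Ob C"
  shows "ident C a \<in> Mor C" "dom C (ident C a) = a" "cod C (ident C a) = a"
  using assms unfolding category_def hom_def by auto

lemma ident_right: "category C \<Longrightarrow> f \<in> Mor C \<Longrightarrow> dom C f = a \<Longrightarrow> comp C f (ident C a) = f"
  unfolding category_def by blast
lemma ident_left: "category C \<Longrightarrow> f \<in> Mor C \<Longrightarrow> cod C f = a \<Longrightarrow> comp C (ident C a) f = f"
  unfolding category_def by blast

lemma pre_cat: "preadditive C \<Longrightarrow> category C"
  unfolding preadditive_def by blast

lemma zero_props:
  assumes "preadditive C" "a \<in> Ob C" "b \<in> Ob C"
  shows "zero C a b \<in> Mor C" "dom C (zero C a b) = a" "cod C (zero C a b) = b"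
  using assms unfolding preadditive_def hom_def by auto

lemma group_cancel:
  assumes "preadditive C" "a \<in> Ob C" "b \<in> Ob C" "x \<in> hom C a b" "plus C x x = x"
  shows "x = zero C a b"
proof -
  have ax: "\<And>f g h. f \<in> hom C a b \<Longrightarrow> g \<in> hom C a b \<Longrightarrow> h \<in> hom C a b \<Longrightarrow>
           plus C (plus C f g) h = plus C f (plus C g h)"
     "\<And>f. f \<in> hom C a b \<Longrightarrow> neg C f \<in> hom C a b"
     "\<And>f. f \<in> hom C a b \<Longrightarrow> plus C f (neg C f) = zero C a b"
     "\<And>f. f \<in> hom C a b \<Longrightarrow> plus C f (zero C a b) = f"
    using assms(1-3) unfolding preadditive_def by blast+
  have n: "neg C x \<in> hom C a b" using ax(2) assms(4) .
  have "zero C a b = plus C x (neg C x)" using ax(3) assms(4) by simp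
  also have "\<dots> = plus C (plus C x x) (neg C x)" using assms by simp
  also have "\<dots> = plus C x (plus C x (neg C x))" using ax(1) assms(4) n by blast
  also have "\<dots> = plus C x (zero C a b)" using ax(3) assms(4) by simp
  also have "\<dots> = x" using ax(4) assms(4) by blast
  finally show ?thesis by simp
qed

lemma zero_right:
  assumes "preadditive C" "g \<in> Mor C" "a \<in> Ob C" "dom C g = b"
  shows "comp C g (zero C a b) = zero C a (cod C g)"
proof -
  have cat: "category C" using assms pre_cat by blast
  have b: "b \<in> Ob C" using dom_Ob[OF cat assms(2)] assms(4) by simp
  have c: "cod C g \<in> Ob C" using cod_Ob[OF cat assms(2)] .
  have z: "zero C a b \<in> hom C a b" "plus C (zero C a b) (zero C a b) = zero C a b"
    using assms(1,3) b unfolding preadditive_def by blast+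
  have g: "g \<in> hom C b (cod C g)" using assms by (simp add: hom_def)
  have "comp C g (plus C (zero C a b) (zero C a b)) = plus C (comp C g (zero C a b)) (comp C g (zero C a b))"
    using assms(1,3) b c z g unfolding preadditive_def by blast
  then have "plus C (comp C g (zero C a b)) (comp C g (zero C a b)) = comp C g (zero C a b)"
    using z by simp
  moreover have "comp C g (zero C a b) \<in> hom C a (cod C g)"
    using z g cat by (simp add: hom_def)
  ultimately show ?thesis using group_cancel[OF assms(1,3) c, of "comp C g (zero C a b)"] by simp
qed

lemma zero_left:
  assumes "preadditive C" "f \<in> Mor C" "c \<in> Ob C" "cod C f = b"
  shows "comp C (zero C b c) f = zero C (dom C f) c"
proof -
  have cat: "category C" using assms pre_cat by blast
  have b: "b \<in> Ob C" using cod_Ob[OF cat assms(2)] assms(4) by simp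
  have a: "dom C f \<in> Ob C" using dom_Ob[OF cat assms(2)] .
  have z: "zero C b c \<in> hom C b c" "plus C (zero C b c) (zero C b c) = zero C b c"
    using assms(1,3) b unfolding preadditive_def by blast+
  have f: "f \<in> hom C (dom C f) b" using assms by (simp add: hom_def)
  have "comp C (plus C (zero C b c) (zero C b c)) f = plus C (comp C (zero C b c) f) (comp C (zero C b c) f)"
    using assms(1,3) b a z f unfolding preadditive_def by blast
  then have "plus C (comp C (zero C b c) f) (comp C (zero C b c) f) = comp C (zero C b c) f"
    using z by simp
  moreover have "comp C (zero C b c) f \<in> hom C (dom C f) c"
    using z f cat by (simp add: hom_def)
  ultimately show ?thesis using group_cancel[OF assms(1) a assms(3), of "comp C (zero C b c) f"] by simp
qed


lemma cop_unique:
  assumes cat: "category C" and cp: "is_coproduct C I X S u" and T: "T \<in> Ob C"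
    and h: "h1 \<in> hom C S T" "h2 \<in> hom C S T" and eq: "\<forall>i\<in>I. comp C h1 (u i) = comp C h2 (u i)"
  shows "h1 = h2"
proof -
  have u: "\<forall>i\<in>I. u i \<in> hom C (X i) S" using cp unfolding is_coproduct_def by blast
  have f: "\<forall>i\<in>I. comp C h1 (u i) \<in> hom C (X i) T" using u h cat by (auto simp: hom_def)
  have U: "\<And>T f. T \<in> Ob C \<Longrightarrow> (\<forall>i \<in> I. f i \<in> hom C (X i) T) \<Longrightarrow>
        (\<exists>!h. h \<in> hom C S T \<and> (\<forall>i \<in> I. comp C h (u i) = f i))"
    using cp unfolding is_coproduct_def by blast
  have "\<exists>!k. k \<in> hom C S T \<and> (\<forall>i \<in> I. comp C k (u i) = comp C h1 (u i))"
    using U[OF T f] .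
  then show ?thesis using h eq by metis
qed

lemma cop_exists:
  assumes cp: "is_coproduct C I X S u" and T: "T \<in> Ob C" and f: "\<forall>i\<in>I. f i \<in> hom C (X i) T"
  shows "\<exists>k. k \<in> hom C S T \<and> (\<forall>i \<in> I. comp C k (u i) = f i)"
proof -
  have U: "\<And>T f. T \<in> Ob C \<Longrightarrow> (\<forall>i \<in> I. f i \<in> hom C (X i) T) \<Longrightarrow>
        (\<exists>!h. h \<in> hom C S T \<and> (\<forall>i \<in> I. comp C h (u i) = f i))"
    using cp unfolding is_coproduct_def by blast
  show ?thesis using U[OF T f] by blast
qed

lemma cop_u: "is_coproduct C I X S u \<Longrightarrow> i \<in> I \<Longrightarrow> u i \<in> Mor C \<and> dom C (u i) = X i \<and> cod C (u i) = S"
  unfolding is_coproduct_def hom_def by blast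

lemma cop_Ob: "is_coproduct C I X S u \<Longrightarrow> S \<in> Ob C"
  unfolding is_coproduct_def by blast


locale cpsetup =
  fixes C :: "('o, 'm, 'x) addcat_scheme" and I :: "'i set" and B SB SC :: 'o
    and Cc :: "'i \<Rightarrow> 'o" and uB uC m :: "'i \<Rightarrow> 'm" and mu s :: 'm
  assumes cat: "category C"
    and B: "B \<in> Ob C"
    and cB: "is_coproduct C I (\<lambda>_. B) SB uB"
    and cC: "is_coproduct C I Cc SC uC"
    and m: "\<forall>i\<in>I. m i \<in> hom C B (Cc i)"
    and mu: "is_coproduct_mor C I SB uB SC uC m mu"
    and s: "s \<in> hom C SB B" "\<forall>i\<in>I. comp C s (uB i) = ident C B"
begin

lemma facts:
  "mu \<in> Mor C" "dom C mu = SB" "cod C mu = SC" "s \<in> Mor C" "dom C s = SB" "cod C s = B"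
  "\<And>i. i \<in> I \<Longrightarrow> m i \<in> Mor C \<and> dom C (m i) = B \<and> cod C (m i) = Cc i"
  "\<And>i. i \<in> I \<Longrightarrow> uB i \<in> Mor C \<and> dom C (uB i) = B \<and> cod C (uB i) = SB"
  "\<And>i. i \<in> I \<Longrightarrow> uC i \<in> Mor C \<and> dom C (uC i) = Cc i \<and> cod C (uC i) = SC"
  "\<And>i. i \<in> I \<Longrightarrow> comp C mu (uB i) = comp C (uC i) (m i)"
  "SB \<in> Ob C" "SC \<in> Ob C"
  using mu s m cop_u[OF cB] cop_u[OF cC] cop_Ob[OF cB] cop_Ob[OF cC]
  unfolding is_coproduct_mor_def hom_def by auto

lemma K:
  assumes T: "T \<in> Ob C" and x: "x \<in> hom C SC T" and y: "y \<in> hom C B T"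
  shows "comp C x mu = comp C y s \<longleftrightarrow> (\<forall>i\<in>I. comp C (comp C x (uC i)) (m i) = y)"
proof
  have xx: "x \<in> Mor C" "dom C x = SC" "cod C x = T" using x by (auto simp: hom_def)
  have yy: "y \<in> Mor C" "dom C y = B" "cod C y = T" using y by (auto simp: hom_def)
  note F = facts xx yy cat
  {
    assume eq: "comp C x mu = comp C y s"
    show "\<forall>i\<in>I. comp C (comp C x (uC i)) (m i) = y"
    proof
      fix i assume i: "i \<in> I"
      note G = F(7-10)[OF i]
      have "comp C (comp C x (uC i)) (m i) = comp C x (comp C (uC i) (m i))"
        using assoc[of C "m i" "uC i" x] F G by auto
      also have "\<dots> = comp C x (comp C mu (uB i))" using G by simp
      also have "\<dots> = comp C (comp C x mu) (uB i)"
        using assoc[of C "uB i" mu x] F G by auto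
      also have "\<dots> = comp C (comp C y s) (uB i)" using eq by simp
      also have "\<dots> = comp C y (comp C s (uB i))"
        using assoc[of C "uB i" s y] F G by auto
      also have "\<dots> = y" using s i ident_right[of C y B] F by simp
      finally show "comp C (comp C x (uC i)) (m i) = y" .
    qed
  }
  {
    assume eq: "\<forall>i\<in>I. comp C (comp C x (uC i)) (m i) = y"
    show "comp C x mu = comp C y s"
    proof (rule cop_unique[OF cat cB T])
      show "comp C x mu \<in> hom C SB T" "comp C y s \<in> hom C SB T" using F by (auto simp: hom_def)
      show "\<forall>i\<in>I. comp C (comp C x mu) (uB i) = comp C (comp C y s) (uB i)"
      proof
        fix i assume i: "i \<in> I"
        note G = F(7-10)[OF i]
        have "comp C (comp C x mu) (uB i) = comp C x (comp C mu (uB i))"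
          using assoc[of C "uB i" mu x] F G by auto
        also have "\<dots> = comp C x (comp C (uC i) (m i))" using G by simp
        also have "\<dots> = comp C (comp C x (uC i)) (m i)"
          using assoc[of C "m i" "uC i" x] F G by auto
        also have "\<dots> = y" using eq i by blast
        also have "\<dots> = comp C y (comp C s (uB i))" using s i ident_right[of C y B] F by simp
        also have "\<dots> = comp C (comp C y s) (uB i)"
          using assoc[of C "uB i" s y] F G by auto
        finally show "comp C (comp C x mu) (uB i) = comp C (comp C y s) (uB i)" .
      qed
    qed
  }
qed


lemma A1:
  assumes po: "is_pushout C mu s P mp q"
  shows "is_wide_pushout C I B Cc m P (\<lambda>i. comp C q (uC i)) mp"
proof -
  have P: "P \<in> Ob C" and q: "q \<in> hom C SC P" and mp: "mp \<in> hom C B P"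
    and sq: "comp C q mu = comp C mp s"
    and U: "\<And>T x y. T \<in> Ob C \<Longrightarrow> x \<in> hom C SC T \<Longrightarrow> y \<in> hom C B T \<Longrightarrow>
        comp C x mu = comp C y s \<Longrightarrow> (\<exists>!h. h \<in> hom C P T \<and> comp C h q = x \<and> comp C h mp = y)"
    using po facts unfolding is_pushout_def by auto
  have qq: "q \<in> Mor C" "dom C q = SC" "cod C q = P" using q by (auto simp: hom_def)
  have mpp: "mp \<in> Mor C" "dom C mp = B" "cod C mp = P" using mp by (auto simp: hom_def)
  note F = facts qq mpp cat
  have c1: "\<forall>i\<in>I. comp C q (uC i) \<in> hom C (Cc i) P \<and> comp C (comp C q (uC i)) (m i) = mp"
    using K[OF P q mp] sq F by (auto simp: hom_def)
  show ?thesis unfolding is_wide_pushout_def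
  proof (intro conjI ballI allI impI)
    show "P \<in> Ob C" "mp \<in> hom C B P" by fact+
    fix i assume "i \<in> I" then show "comp C q (uC i) \<in> hom C (Cc i) P"
      "comp C (comp C q (uC i)) (m i) = mp" using c1 by auto
  next
    fix T t f
    assume T: "T \<in> Ob C" and t: "t \<in> hom C B T"
      and f: "\<forall>i\<in>I. f i \<in> hom C (Cc i) T \<and> comp C (f i) (m i) = t"
    obtain x where x: "x \<in> hom C SC T" "\<forall>i\<in>I. comp C x (uC i) = f i"
      using cop_exists[OF cC T, of f] f by blast
    have "comp C x mu = comp C t s" using K[OF T x(1) t] x f by auto
    then obtain h where h: "h \<in> hom C P T" "comp C h q = x" "comp C h mp = t"
      and hu: "\<And>h'. h' \<in> hom C P T \<Longrightarrow> comp C h' q = x \<Longrightarrow> comp C h' mp = t \<Longrightarrow> h' = h"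
      using U[OF T x(1) t] by metis
    have hh: "h \<in> Mor C" "dom C h = P" "cod C h = T" using h by (auto simp: hom_def)
    have xx: "x \<in> Mor C" "dom C x = SC" "cod C x = T" using x by (auto simp: hom_def)
    show "\<exists>!h. h \<in> hom C P T \<and> comp C h mp = t \<and> (\<forall>i\<in>I. comp C h (comp C q (uC i)) = f i)"
    proof
      show "h \<in> hom C P T \<and> comp C h mp = t \<and> (\<forall>i\<in>I. comp C h (comp C q (uC i)) = f i)"
      proof (intro conjI ballI)
        fix i assume i: "i \<in> I"
        have "comp C h (comp C q (uC i)) = comp C (comp C h q) (uC i)"
          using assoc[of C "uC i" q h] F hh i by auto
        then show "comp C h (comp C q (uC i)) = f i" using h x i by simp
      qed (use h in auto)
    next
      fix h' assume h': "h' \<in> hom C P T \<and> comp C h' mp = t \<and> (\<forall>i\<in>I. comp C h' (comp C q (uC i)) = f i)"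
      have hh': "h' \<in> Mor C" "dom C h' = P" "cod C h' = T" using h' by (auto simp: hom_def)
      have "comp C h' q = x"
      proof (rule cop_unique[OF cat cC T])
        show "comp C h' q \<in> hom C SC T" using hh' F by (auto simp: hom_def)
        show "x \<in> hom C SC T" by fact
        show "\<forall>i\<in>I. comp C (comp C h' q) (uC i) = comp C x (uC i)"
        proof
          fix i assume i: "i \<in> I"
          have "comp C (comp C h' q) (uC i) = comp C h' (comp C q (uC i))"
            using assoc[of C "uC i" q h'] F hh' i by auto
          then show "comp C (comp C h' q) (uC i) = comp C x (uC i)" using h' x i by simp
        qed
      qed
      then show "h' = h" using hu h' by blast
    qed
  qed
qed

lemma A2:
  assumes wp: "is_wide_pushout C I B Cc m P c mp" and q: "q \<in> hom C SC P"
    and qc: "\<forall>i\<in>I. comp C q (uC i) = c i"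
  shows "is_pushout C mu s P mp q"
proof -
  have P: "P \<in> Ob C" and mp: "mp \<in> hom C B P"
    and c: "\<forall>i\<in>I. c i \<in> hom C (Cc i) P \<and> comp C (c i) (m i) = mp"
    and U: "\<And>T t f. T \<in> Ob C \<Longrightarrow> t \<in> hom C B T \<Longrightarrow> (\<forall>i \<in> I. f i \<in> hom C (Cc i) T \<and> comp C (f i) (m i) = t)
        \<Longrightarrow> (\<exists>!h. h \<in> hom C P T \<and> comp C h mp = t \<and> (\<forall>i \<in> I. comp C h (c i) = f i))"
    using wp unfolding is_wide_pushout_def by auto
  have qq: "q \<in> Mor C" "dom C q = SC" "cod C q = P" using q by (auto simp: hom_def)
  have mpp: "mp \<in> Mor C" "dom C mp = B" "cod C mp = P" using mp by (auto simp: hom_def)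
  note F = facts qq mpp cat
  have sq: "comp C q mu = comp C mp s" using K[OF P q mp] qc c by auto
  show ?thesis unfolding is_pushout_def
  proof (intro conjI ballI allI impI)
    show "mu \<in> Mor C" "s \<in> Mor C" "dom C mu = dom C s" "P \<in> Ob C" "q \<in> hom C (cod C mu) P"
      "mp \<in> hom C (cod C s) P" "comp C q mu = comp C mp s" using F P q mp sq by auto
  next
    fix T x y
    assume T: "T \<in> Ob C" and x: "x \<in> hom C (cod C mu) T" and y: "y \<in> hom C (cod C s) T"
      and eq: "comp C x mu = comp C y s"
    have x': "x \<in> hom C SC T" and y': "y \<in> hom C B T" using x y F by auto
    have xx: "x \<in> Mor C" "dom C x = SC" "cod C x = T" using x' by (auto simp: hom_def)
    have fi: "\<forall>i\<in>I. comp C x (uC i) \<in> hom C (Cc i) T \<and> comp C (comp C x (uC i)) (m i) = y"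
      using K[OF T x' y'] eq F xx by (auto simp: hom_def)
    obtain h where h: "h \<in> hom C P T" "comp C h mp = y" "\<forall>i \<in> I. comp C h (c i) = comp C x (uC i)"
      and hu: "\<And>h'. h' \<in> hom C P T \<Longrightarrow> comp C h' mp = y \<Longrightarrow> (\<forall>i \<in> I. comp C h' (c i) = comp C x (uC i)) \<Longrightarrow> h' = h"
      using U[OF T y' fi] by metis
    have hh: "h \<in> Mor C" "dom C h = P" "cod C h = T" using h by (auto simp: hom_def)
    show "\<exists>!h. h \<in> hom C P T \<and> comp C h q = x \<and> comp C h mp = y"
    proof
      have "comp C h q = x"
      proof (rule cop_unique[OF cat cC T])
        show "comp C h q \<in> hom C SC T" using hh F by (auto simp: hom_def)
        show "x \<in> hom C SC T" by fact
        show "\<forall>i\<in>I. comp C (comp C h q) (uC i) = comp C x (uC i)"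
        proof
          fix i assume i: "i \<in> I"
          have "comp C (comp C h q) (uC i) = comp C h (comp C q (uC i))"
            using assoc[of C "uC i" q h] F hh i by auto
          then show "comp C (comp C h q) (uC i) = comp C x (uC i)" using h qc i by simp
        qed
      qed
      then show "h \<in> hom C P T \<and> comp C h q = x \<and> comp C h mp = y" using h by auto
    next
      fix h' assume h': "h' \<in> hom C P T \<and> comp C h' q = x \<and> comp C h' mp = y"
      have hh': "h' \<in> Mor C" "dom C h' = P" "cod C h' = T" using h' by (auto simp: hom_def)
      have "\<forall>i \<in> I. comp C h' (c i) = comp C x (uC i)"
      proof
        fix i assume i: "i \<in> I"
        have "comp C h' (comp C q (uC i)) = comp C (comp C h' q) (uC i)"
          using assoc[of C "uC i" q h'] F hh' i by auto
        then show "comp C h' (c i) = comp C x (uC i)" using h' qc i by simp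
      qed
      then show "h' = h" using hu h' by blast
    qed
  qed
qed

end


lemma LB:
  assumes pre: "preadditive C" and po: "is_pushout C mu s P mp q" and ck: "is_cokernel C eu mu"
  shows "\<exists>d. d \<in> hom C P (cod C eu) \<and> comp C d q = eu \<and> comp C d mp = zero C (cod C s) (cod C eu)
     \<and> is_cokernel C d mp"
proof -
  have cat: "category C" using pre pre_cat by blast
  have P: "P \<in> Ob C" and q: "q \<in> hom C (cod C mu) P" and mp: "mp \<in> hom C (cod C s) P"
    and sq: "comp C q mu = comp C mp s" and mus: "mu \<in> Mor C" "s \<in> Mor C" "dom C mu = dom C s"
    and U: "\<And>T x y. T \<in> Ob C \<Longrightarrow> x \<in> hom C (cod C mu) T \<Longrightarrow> y \<in> hom C (cod C s) T \<Longrightarrow>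
        comp C x mu = comp C y s \<Longrightarrow> (\<exists>!h. h \<in> hom C P T \<and> comp C h q = x \<and> comp C h mp = y)"
    using po unfolding is_pushout_def by auto
  have eu: "eu \<in> Mor C" "dom C eu = cod C mu" "comp C eu mu = zero C (dom C mu) (cod C eu)"
    and CU: "\<And>g. g \<in> Mor C \<Longrightarrow> dom C g = cod C mu \<Longrightarrow> comp C g mu = zero C (dom C mu) (cod C g) \<Longrightarrow>
        (\<exists>!h. h \<in> hom C (cod C eu) (cod C g) \<and> comp C h eu = g)"
    using ck unfolding is_cokernel_def by auto
  have qq: "q \<in> Mor C" "dom C q = cod C mu" "cod C q = P" using q by (auto simp: hom_def)
  have mpp: "mp \<in> Mor C" "dom C mp = cod C s" "cod C mp = P" using mp by (auto simp: hom_def)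
  define T where "T = cod C eu"
  have T: "T \<in> Ob C" using cod_Ob[OF cat eu(1)] T_def by simp
  have Bo: "cod C s \<in> Ob C" using cod_Ob[OF cat mus(2)] .
  have SBo: "dom C mu \<in> Ob C" using dom_Ob[OF cat mus(1)] .
  have z: "zero C (cod C s) T \<in> hom C (cod C s) T" using zero_props[OF pre Bo T] by (simp add: hom_def)
  have "comp C (zero C (cod C s) T) s = zero C (dom C s) T" using zero_left[OF pre mus(2) T] by simp
  then have "comp C eu mu = comp C (zero C (cod C s) T) s" using eu mus T_def by simp
  moreover have x: "eu \<in> hom C (cod C mu) T" using eu T_def by (simp add: hom_def)
  ultimately obtain d where d: "d \<in> hom C P T" "comp C d q = eu" "comp C d mp = zero C (cod C s) T"
    using U[OF T x z] by blast
  have dd: "d \<in> Mor C" "dom C d = P" "cod C d = T" using d by (auto simp: hom_def)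
  note F = cat qq mpp dd eu mus
  have "is_cokernel C d mp" unfolding is_cokernel_def
  proof (intro conjI ballI impI)
    show "d \<in> Mor C" "mp \<in> Mor C" "dom C d = cod C mp" "comp C d mp = zero C (dom C mp) (cod C d)"
      using F d by auto
  next
    fix g assume g: "g \<in> Mor C" "dom C g = cod C mp \<and> comp C g mp = zero C (dom C mp) (cod C g)"
    have go: "cod C g \<in> Ob C" using cod_Ob[OF cat g(1)] .
    have gq: "comp C g q \<in> Mor C" "dom C (comp C g q) = cod C mu" "cod C (comp C g q) = cod C g"
      using F g by auto
    have "comp C (comp C g q) mu = comp C g (comp C q mu)" using assoc[of C mu q g] F g by auto
    also have "\<dots> = comp C g (comp C mp s)" using sq by simp
    also have "\<dots> = comp C (comp C g mp) s" using assoc[of C s mp g] F g by auto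
    also have "\<dots> = zero C (dom C mu) (cod C g)" using g zero_left[OF pre mus(2) go] F by auto
    finally have gz: "comp C (comp C g q) mu = zero C (dom C mu) (cod C g)" .
    have gz': "comp C (comp C g q) mu = zero C (dom C mu) (cod C (comp C g q))" using gz gq(3) by simp
    have ex1: "\<exists>!h. h \<in> hom C (cod C eu) (cod C g) \<and> comp C h eu = comp C g q"
      using CU[OF gq(1,2) gz'] unfolding gq(3) .
    obtain h where h: "h \<in> hom C (cod C eu) (cod C g)" "comp C h eu = comp C g q"
      and hu: "\<And>h'. h' \<in> hom C (cod C eu) (cod C g) \<Longrightarrow> comp C h' eu = comp C g q \<Longrightarrow> h' = h"
      using ex1 by metis
    have hh: "h \<in> Mor C" "dom C h = T" "cod C h = cod C g" using h T_def by (auto simp: hom_def)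
    have gmp: "comp C g mp \<in> hom C (cod C s) (cod C g)" using F g mpp zero_props[OF pre Bo go] by (simp add: hom_def)
    have gqh: "comp C g q \<in> hom C (cod C mu) (cod C g)" using gq by (auto simp: hom_def)
    have sq2: "comp C (comp C g q) mu = comp C (comp C g mp) s"
      using assoc[of C mu q g] assoc[of C s mp g] F g sq by auto
    have hd: "comp C h d = g"
    proof -
      from U[OF go gqh gmp sq2] have uq: "\<And>a b. a \<in> hom C P (cod C g) \<and> comp C a q = comp C g q \<and> comp C a mp = comp C g mp
           \<Longrightarrow> b \<in> hom C P (cod C g) \<and> comp C b q = comp C g q \<and> comp C b mp = comp C g mp \<Longrightarrow> a = b"
        by metis
      show ?thesis
      proof (rule uq)
        have "comp C (comp C h d) q = comp C h (comp C d q)" using assoc[of C q d h] F hh by auto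
        moreover have "comp C (comp C h d) mp = comp C h (comp C d mp)" using assoc[of C mp d h] F hh by auto
        moreover have "comp C h (zero C (cod C s) T) = zero C (cod C s) (cod C g)"
          using zero_right[OF pre hh(1) Bo] hh by simp
        ultimately show "comp C h d \<in> hom C P (cod C g) \<and> comp C (comp C h d) q = comp C g q \<and>
            comp C (comp C h d) mp = comp C g mp" using F hh d h g by (auto simp: hom_def)
        show "g \<in> hom C P (cod C g) \<and> comp C g q = comp C g q \<and> comp C g mp = comp C g mp"
          using g F by (auto simp: hom_def)
      qed
    qed
    show "\<exists>!h. h \<in> hom C (cod C d) (cod C g) \<and> comp C h d = g"
    proof
      show "h \<in> hom C (cod C d) (cod C g) \<and> comp C h d = g" using h hd dd T_def by auto
    next
      fix h' assume h': "h' \<in> hom C (cod C d) (cod C g) \<and> comp C h' d = g"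
      have hh': "h' \<in> Mor C" "dom C h' = T" "cod C h' = cod C g" using h' dd by (auto simp: hom_def)
      have "comp C h' eu = comp C h' (comp C d q)" using d by simp
      also have "\<dots> = comp C (comp C h' d) q" using assoc[of C q d h'] F hh' by auto
      also have "\<dots> = comp C g q" using h' by simp
      finally show "h' = h" using hu h' dd T_def by auto
    qed
  qed
  then show ?thesis using d T_def by auto
qed

lemma LC:
  assumes ex: "exact_category C E" and E: "(mp, d2) \<in> E" and ck: "is_cokernel C d mp"
  shows "(mp, d) \<in> E"
proof -
  have pre: "preadditive C" using ex unfolding exact_category_def additive_def by blast
  have cat: "category C" using pre pre_cat by blast
  have kc: "kernel_cokernel_pair C mp d2" using ex E unfolding exact_category_def by blast
  have clos: "\<And>i d i' d' a b c. (i, d) \<in> E \<Longrightarrow> kernel_cokernel_pair C i' d' \<Longrightarrow>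
        is_iso C a \<Longrightarrow> is_iso C b \<Longrightarrow> is_iso C c \<Longrightarrow>
        a \<in> hom C (dom C i) (dom C i') \<Longrightarrow> b \<in> hom C (cod C i) (cod C i') \<Longrightarrow>
        c \<in> hom C (cod C d) (cod C d') \<Longrightarrow>
        comp C i' a = comp C b i \<Longrightarrow> comp C d' b = comp C c d \<Longrightarrow> (i', d') \<in> E"
    using ex unfolding exact_category_def by blast
  have K2: "is_kernel C mp d2" and C2: "is_cokernel C d2 mp" using kc unfolding kernel_cokernel_pair_def by auto
  have d2: "d2 \<in> Mor C" "dom C d2 = cod C mp" "comp C d2 mp = zero C (dom C mp) (cod C d2)"
    and CU2: "\<And>g. g \<in> Mor C \<Longrightarrow> dom C g = cod C mp \<Longrightarrow> comp C g mp = zero C (dom C mp) (cod C g) \<Longrightarrow>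
        (\<exists>!h. h \<in> hom C (cod C d2) (cod C g) \<and> comp C h d2 = g)"
    using C2 unfolding is_cokernel_def by auto
  have dd: "d \<in> Mor C" "mp \<in> Mor C" "dom C d = cod C mp" "comp C d mp = zero C (dom C mp) (cod C d)"
    and CU: "\<And>g. g \<in> Mor C \<Longrightarrow> dom C g = cod C mp \<Longrightarrow> comp C g mp = zero C (dom C mp) (cod C g) \<Longrightarrow>
        (\<exists>!h. h \<in> hom C (cod C d) (cod C g) \<and> comp C h d = g)"
    using ck unfolding is_cokernel_def by auto
  have KU2: "\<And>g. g \<in> Mor C \<Longrightarrow> cod C g = dom C d2 \<Longrightarrow> comp C d2 g = zero C (dom C g) (cod C d2) \<Longrightarrow>
        (\<exists>!h. h \<in> hom C (dom C g) (dom C mp) \<and> comp C mp h = g)"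
    using K2 unfolding is_kernel_def by auto
  obtain phi where phi: "phi \<in> hom C (cod C d2) (cod C d)" "comp C phi d2 = d"
    using CU2[OF dd(1,3,4)] by blast
  obtain psi where psi: "psi \<in> hom C (cod C d) (cod C d2)" "comp C psi d = d2"
    using CU[OF d2] by blast
  have ph: "phi \<in> Mor C" "dom C phi = cod C d2" "cod C phi = cod C d" using phi by (auto simp: hom_def)
  have ps: "psi \<in> Mor C" "dom C psi = cod C d" "cod C psi = cod C d2" using psi by (auto simp: hom_def)
  have o2: "cod C d2 \<in> Ob C" "cod C d \<in> Ob C" "dom C mp \<in> Ob C" "cod C mp \<in> Ob C"
    using cod_Ob[OF cat d2(1)] cod_Ob[OF cat dd(1)] dom_Ob[OF cat dd(2)] cod_Ob[OF cat dd(2)] by auto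
  note I2 = ident_props[OF cat o2(1)] and I1 = ident_props[OF cat o2(2)]
  have "comp C psi phi = ident C (cod C d2)"
  proof -
    from CU2[OF d2(1,2,3)] have u: "\<And>a b. a \<in> hom C (cod C d2) (cod C d2) \<and> comp C a d2 = d2 \<Longrightarrow>
       b \<in> hom C (cod C d2) (cod C d2) \<and> comp C b d2 = d2 \<Longrightarrow> a = b" by metis
    show ?thesis
    proof (rule u)
      have "comp C (comp C psi phi) d2 = comp C psi (comp C phi d2)" using assoc[of C d2 phi psi] cat d2 ph ps by auto
      then show "comp C psi phi \<in> hom C (cod C d2) (cod C d2) \<and> comp C (comp C psi phi) d2 = d2"
        using phi psi cat ph ps by (auto simp: hom_def)
      show "ident C (cod C d2) \<in> hom C (cod C d2) (cod C d2) \<and> comp C (ident C (cod C d2)) d2 = d2"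
        using I2 ident_left[OF cat d2(1)] by (auto simp: hom_def)
    qed
  qed
  moreover have "comp C phi psi = ident C (cod C d)"
  proof -
    from CU[OF dd(1,3,4)] have u: "\<And>a b. a \<in> hom C (cod C d) (cod C d) \<and> comp C a d = d \<Longrightarrow>
       b \<in> hom C (cod C d) (cod C d) \<and> comp C b d = d \<Longrightarrow> a = b" by metis
    show ?thesis
    proof (rule u)
      have "comp C (comp C phi psi) d = comp C phi (comp C psi d)" using assoc[of C d psi phi] cat dd ph ps by auto
      then show "comp C phi psi \<in> hom C (cod C d) (cod C d) \<and> comp C (comp C phi psi) d = d"
        using phi psi cat ph ps by (auto simp: hom_def)
      show "ident C (cod C d) \<in> hom C (cod C d) (cod C d) \<and> comp C (ident C (cod C d)) d = d"
        using I1 ident_left[OF cat dd(1)] by (auto simp: hom_def)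
    qed
  qed
  ultimately have iso: "is_iso C phi" unfolding is_iso_def using ph ps by (auto simp: hom_def)
  have isoid: "\<And>a. a \<in> Ob C \<Longrightarrow> is_iso C (ident C a)"
    unfolding is_iso_def using ident_props[OF cat] ident_left[OF cat] by (auto simp: hom_def)
  have "is_kernel C mp d" unfolding is_kernel_def
  proof (intro conjI ballI impI)
    show "mp \<in> Mor C" "d \<in> Mor C" "cod C mp = dom C d" "comp C d mp = zero C (dom C mp) (cod C d)"
      using dd by auto
  next
    fix g assume g: "g \<in> Mor C" "cod C g = dom C d \<and> comp C d g = zero C (dom C g) (cod C d)"
    have go: "dom C g \<in> Ob C" using dom_Ob[OF cat g(1)] .
    have "comp C d2 g = comp C (comp C psi d) g" using psi by simp
    also have "\<dots> = comp C psi (comp C d g)" using assoc[of C g d psi] cat g dd ps by auto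
    also have "\<dots> = zero C (dom C g) (cod C d2)" using g zero_right[OF pre ps(1) go] ps by simp
    finally show "\<exists>!h. h \<in> hom C (dom C g) (dom C mp) \<and> comp C mp h = g"
      using KU2[OF g(1)] g d2 dd by auto
  qed
  then have "kernel_cokernel_pair C mp d" using ck unfolding kernel_cokernel_pair_def by blast
  show ?thesis
  proof (rule clos[OF E \<open>kernel_cokernel_pair C mp d\<close> isoid[OF o2(3)] isoid[OF o2(4)] iso])
    show "ident C (dom C mp) \<in> hom C (dom C mp) (dom C mp)" "ident C (cod C mp) \<in> hom C (cod C mp) (cod C mp)"
      "phi \<in> hom C (cod C d2) (cod C d)" using ident_props[OF cat] o2 phi by (auto simp: hom_def)
    show "comp C mp (ident C (dom C mp)) = comp C (ident C (cod C mp)) mp"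
      using ident_left[OF cat dd(2)] ident_right[OF cat dd(2)] by simp
    show "comp C d (ident C (cod C mp)) = comp C phi d2"
      using ident_right[OF cat dd(1)] dd phi by simp
  qed
qed


theorem lemma5p1:
  fixes C :: "('o, 'm, 'x) addcat_scheme"
    and E :: "('m \<times> 'm) set"
    and I :: "'i set"
    and B :: 'o and Cc A :: "'i \<Rightarrow> 'o" and m e :: "'i \<Rightarrow> 'm"
  assumes "exact_category C E"
    and "exact_coproducts C E TYPE('i)"
    and "B \<in> Ob C"
    and "\<forall>i \<in> I. (m i, e i) \<in> E \<and> m i \<in> hom C B (Cc i) \<and> e i \<in> hom C (Cc i) (A i)"
  shows "\<exists>P c mp. is_wide_pushout C I B Cc m P c mp \<and>
     (\<forall>SB uB SC uC SA uA mu eu s.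
        is_coproduct C I (\<lambda>_. B) SB uB \<and> is_coproduct C I Cc SC uC \<and> is_coproduct C I A SA uA \<and>
        is_coproduct_mor C I SB uB SC uC m mu \<and> is_coproduct_mor C I SC uC SA uA e eu \<and>
        s \<in> hom C SB B \<and> (\<forall>i \<in> I. comp C s (uB i) = ident C B)
        \<longrightarrow> (\<exists>q d. q \<in> hom C SC P \<and> (\<forall>i \<in> I. comp C q (uC i) = c i) \<and>
               is_pushout C mu s P mp q \<and>
               d \<in> hom C P SA \<and> (mp, d) \<in> E \<and> comp C d q = eu \<and> comp C d mp = zero C B SA))"
proof -
  note ex = assms(1) and xc = assms(2) and Bo = assms(3) and fam = assms(4)
  have pre: "preadditive C" using ex unfolding exact_category_def additive_def by blast
  have cat: "category C" using pre pre_cat by blast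
  have Mi: "\<And>i. i \<in> I \<Longrightarrow> m i \<in> Mor C \<and> dom C (m i) = B \<and> cod C (m i) = Cc i
      \<and> e i \<in> Mor C \<and> dom C (e i) = Cc i \<and> cod C (e i) = A i"
    using fam by (auto simp: hom_def)
  have Oi: "\<And>i. i \<in> I \<Longrightarrow> Cc i \<in> Ob C \<and> A i \<in> Ob C"
  proof -
    fix i assume i: "i \<in> I"
    have "cod C (m i) \<in> Ob C" "cod C (e i) \<in> Ob C"
      using cod_Ob[OF cat, of "m i"] cod_Ob[OF cat, of "e i"] Mi[OF i] by auto
    then show "Cc i \<in> Ob C \<and> A i \<in> Ob C" using Mi[OF i] by simp
  qed
  have cpex: "\<And>X. \<forall>i \<in> I. X i \<in> Ob C \<Longrightarrow> \<exists>S u. is_coproduct C I X S u"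
    using xc unfolding exact_coproducts_def by blast
  have cpE0: "\<forall>(I :: 'i set) X Y Z m e SX uX SY uY SZ uZ mm ee.
        (\<forall>i \<in> I. (m i, e i) \<in> E \<and> m i \<in> hom C (X i) (Y i) \<and> e i \<in> hom C (Y i) (Z i)) \<and>
        is_coproduct C I X SX uX \<and> is_coproduct C I Y SY uY \<and> is_coproduct C I Z SZ uZ \<and>
        is_coproduct_mor C I SX uX SY uY m mm \<and> is_coproduct_mor C I SY uY SZ uZ e ee
        \<longrightarrow> (mm, ee) \<in> E"
    using xc unfolding exact_coproducts_def by (elim conjE)
  note cpE = cpE0[rule_format]
  have E2: "\<And>i f. inflation C E i \<Longrightarrow> f \<in> Mor C \<Longrightarrow> dom C f = dom C i \<Longrightarrow>
        (\<exists>P i' f'. is_pushout C i f P i' f' \<and> inflation C E i')"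
    using ex unfolding exact_category_def by blast
  have kcE: "\<And>i d. (i, d) \<in> E \<Longrightarrow> kernel_cokernel_pair C i d"
    using ex unfolding exact_category_def by blast
  obtain SB0 uB0 where cB0: "is_coproduct C I (\<lambda>_. B) SB0 uB0" using cpex[of "\<lambda>_. B"] Bo by blast
  obtain SC0 uC0 where cC0: "is_coproduct C I Cc SC0 uC0" using cpex[of Cc] Oi by blast
  obtain SA0 uA0 where cA0: "is_coproduct C I A SA0 uA0" using cpex[of A] Oi by blast
  have SC0o: "SC0 \<in> Ob C" "SA0 \<in> Ob C" using cop_Ob[OF cC0] cop_Ob[OF cA0] by auto
  obtain mu0 where mu0: "mu0 \<in> hom C SB0 SC0" "\<forall>i\<in>I. comp C mu0 (uB0 i) = comp C (uC0 i) (m i)"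
    using cop_exists[OF cB0 SC0o(1), of "\<lambda>i. comp C (uC0 i) (m i)"] Mi cop_u[OF cC0] cat
    by (auto simp: hom_def)
  obtain eu0 where eu0: "eu0 \<in> hom C SC0 SA0" "\<forall>i\<in>I. comp C eu0 (uC0 i) = comp C (uA0 i) (e i)"
    using cop_exists[OF cC0 SC0o(2), of "\<lambda>i. comp C (uA0 i) (e i)"] Mi cop_u[OF cA0] cat
    by (auto simp: hom_def)
  obtain s0 where s0: "s0 \<in> hom C SB0 B" "\<forall>i\<in>I. comp C s0 (uB0 i) = ident C B"
    using cop_exists[OF cB0 Bo, of "\<lambda>i. ident C B"] ident_props[OF cat Bo]
    by (auto simp: hom_def)
  have mor0: "is_coproduct_mor C I SB0 uB0 SC0 uC0 m mu0" "is_coproduct_mor C I SC0 uC0 SA0 uA0 e eu0"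
    using mu0 eu0 unfolding is_coproduct_mor_def by auto
  have "(mu0, eu0) \<in> E"
    by (rule cpE[where I=I and X="\<lambda>_. B" and Y=Cc and Z=A and m=m and e=e and SX=SB0 and uX=uB0 and SY=SC0 and uY=uC0 and SZ=SA0 and uZ=uA0 and mm=mu0 and ee=eu0]) (use fam cB0 cC0 cA0 mor0 in simp)
  then have "inflation C E mu0" unfolding inflation_def by blast
  then obtain P mp q0 where po0: "is_pushout C mu0 s0 P mp q0" and infl: "inflation C E mp"
    using E2[of mu0 s0] s0 mu0 by (auto simp: hom_def)
  interpret S0: cpsetup C I B SB0 SC0 Cc uB0 uC0 m mu0 s0
    by unfold_locales (use cat Bo cB0 cC0 fam mor0 s0 in auto)
  define c where "c = (\<lambda>i. comp C q0 (uC0 i))"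
  have wp: "is_wide_pushout C I B Cc m P c mp" using S0.A1[OF po0] c_def by simp
  have Po: "P \<in> Ob C" and ci: "\<forall>i\<in>I. c i \<in> hom C (Cc i) P"
    using wp unfolding is_wide_pushout_def by auto
  show ?thesis
  proof (rule exI[of _ P], rule exI[of _ c], rule exI[of _ mp], intro conjI allI impI)
    show "is_wide_pushout C I B Cc m P c mp" by fact
    fix SB uB SC uC SA uA mu eu s
    assume H: "is_coproduct C I (\<lambda>_. B) SB uB \<and> is_coproduct C I Cc SC uC \<and> is_coproduct C I A SA uA \<and>
        is_coproduct_mor C I SB uB SC uC m mu \<and> is_coproduct_mor C I SC uC SA uA e eu \<and>
        s \<in> hom C SB B \<and> (\<forall>i \<in> I. comp C s (uB i) = ident C B)"
    interpret S: cpsetup C I B SB SC Cc uB uC m mu s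
      by unfold_locales (use cat Bo H fam in auto)
    obtain q where q: "q \<in> hom C SC P" "\<forall>i\<in>I. comp C q (uC i) = c i"
      using cop_exists[OF S.cC Po ci] by blast
    have po: "is_pushout C mu s P mp q" using S.A2[OF wp q] .
    have "(mu, eu) \<in> E"
      by (rule cpE[where I=I and X="\<lambda>_. B" and Y=Cc and Z=A and m=m and e=e and SX=SB and uX=uB and SY=SC and uY=uC and SZ=SA and uZ=uA and mm=mu and ee=eu]) (use fam H in simp)
    then have ck: "is_cokernel C eu mu" using kcE unfolding kernel_cokernel_pair_def by blast
    have codeu: "cod C eu = SA" using H unfolding is_coproduct_mor_def hom_def by auto
    have cods: "cod C s = B" using H by (auto simp: hom_def)
    obtain d where d: "d \<in> hom C P SA" "comp C d q = eu" "comp C d mp = zero C B SA" "is_cokernel C d mp"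
      using LB[OF pre po ck] codeu cods by auto
    obtain d2 where "(mp, d2) \<in> E" using infl unfolding inflation_def by blast
    then have "(mp, d) \<in> E" using LC[OF ex _ d(4)] by blast
    then show "\<exists>q d. q \<in> hom C SC P \<and> (\<forall>i \<in> I. comp C q (uC i) = c i) \<and>
               is_pushout C mu s P mp q \<and>
               d \<in> hom C P SA \<and> (mp, d) \<in> E \<and> comp C d q = eu \<and> comp C d mp = zero C B SA"
      using q po d by blast
  qed
qed

end
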